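(* Let $d\geqslant2$, $m\geqslant1$ and $f_1,\dots,f_d\in\mathbb{Z}[X_1,\dots,X_m]$. Let $\mathcal{S}=\{(f_1(n),\dots,f_d(n)):n\in\mathbb{Z}^m\}\subseteq\mathbb{Z}^d$. Let $1\leqslant i\leqslant d$ be such that the map $f_i:\mathbb{Z}^m\to\mathbb{Z}$ is surjective, and let $\mathcal{H}_i=\{(x_1,\dots,x_d)\in\mathbb{Z}^d:x_i=0\}$. Then $\mathcal{H}_i$ is a complement of $\mathcal{S}$ in $\mathbb{Z}^d$. Moreover, if $\mathcal{S}\cap\mathcal{H}_i$ contains exactly one element, then $\mathcal{H}_i$ is a minimal complement of $\mathcal{S}$.
   Context: A nonempty $M\subseteq\mathbb{Z}^d$ is a complement of $W$ if $M+W=\mathbb{Z}^d$, and a minimal complement if no proper subset of $M$ is a complement of $W$. *)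

theory Defs
  imports "HOL-Analysis.Analysis"
begin

text \<open>Points of \<open>\<int>^m\<close> are vectors
  indexed by the finite type \<open>'m\<close> (so \<open>m = CARD('m) \<ge> 1\<close>).\<close>
inductive int_poly_fun :: "(int ^ 'm \<Rightarrow> int) \<Rightarrow> bool" where
  const: "int_poly_fun (\<lambda>x. c)"
| var: "int_poly_fun (\<lambda>x. x $ j)"
| add: "int_poly_fun f \<Longrightarrow> int_poly_fun g \<Longrightarrow> int_poly_fun (\<lambda>x. f x + g x)"
| mult: "int_poly_fun f \<Longrightarrow> int_poly_fun g \<Longrightarrow> int_poly_fun (\<lambda>x. f x * g x)"

definition sumset :: "'a::plus set \<Rightarrow> 'a set \<Rightarrow> 'a set" where
  "sumset A B = {a + b | a b. a \<in> A \<and> b \<in> B}"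

definition is_complement :: "'a::plus set \<Rightarrow> 'a set \<Rightarrow> bool" where
  "is_complement M W \<longleftrightarrow> M \<noteq> {} \<and> sumset M W = UNIV"

definition is_minimal_complement :: "'a::plus set \<Rightarrow> 'a set \<Rightarrow> bool" where
  "is_minimal_complement M W \<longleftrightarrow>
     is_complement M W \<and> (\<forall>M'. M' \<subset> M \<longrightarrow> \<not> is_complement M' W)"

end

theory Submission
  imports Defs
begin

theorem proposition6p2:
  fixes f :: "'d::finite \<Rightarrow> (int ^ 'm::finite \<Rightarrow> int)"
    and i :: 'd
  assumes d2: "CARD('d) \<ge> 2"
    and poly: "\<And>k. int_poly_fun (f k)"
    and surj_i: "surj (f i)"
  defines "S \<equiv> range (\<lambda>n. (\<chi> k. f k n) :: int ^ 'd)"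
    and "H \<equiv> {x :: int ^ 'd. x $ i = 0}"
  shows "is_complement H S \<and> ((\<exists>s. S \<inter> H = {s}) \<longrightarrow> is_minimal_complement H S)"
proof -
  have comp: "is_complement H S"
    unfolding is_complement_def
  proof
    have "(0::int^'d) \<in> H" unfolding H_def by simp
    thus "H \<noteq> {}" by blast
    show "sumset H S = UNIV"
    proof (rule set_eqI, simp add: sumset_def)
      fix y :: "int ^ 'd"
      obtain n where n: "f i n = y $ i" using surj_i by (metis surjD)
      let ?s = "(\<chi> k. f k n) :: int ^ 'd"
      have "?s \<in> S" unfolding S_def by blast
      moreover have "y - ?s \<in> H" unfolding H_def using n by simp
      moreover have "y = (y - ?s) + ?s" by simp
      ultimately show "\<exists>a b. y = a + b \<and> a \<in> H \<and> b \<in> S" by blast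
    qed
  qed
  moreover have "is_minimal_complement H S" if ex: "\<exists>s. S \<inter> H = {s}"
  proof -
    obtain s0 where s0: "S \<inter> H = {s0}" using ex by blast
    have "\<not> is_complement M' S" if M': "M' \<subset> H" for M'
    proof
      assume c: "is_complement M' S"
      obtain h where h: "h \<in> H" "h \<notin> M'" using M' by blast
      have "h + s0 \<in> sumset M' S" using c unfolding is_complement_def by simp
      then obtain m s where ms: "h + s0 = m + s" "m \<in> M'" "s \<in> S"
        unfolding sumset_def by blast
      have "m \<in> H" using ms M' by blast
      have "s0 \<in> H" using s0 by blast
      have "s = h + s0 - m" using ms(1) by (simp add: algebra_simps)
      hence "s $ i = 0" using h \<open>m \<in> H\<close> \<open>s0 \<in> H\<close> unfolding H_def by simp
      hence "s \<in> S \<inter> H" using ms unfolding H_def by simp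
      hence "s = s0" using s0 by blast
      hence "m = h" using ms(1) by simp
      thus False using h ms by simp
    qed
    thus ?thesis using comp unfolding is_minimal_complement_def by blast
  qed
  ultimately show ?thesis by blast
qed

end
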